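(* Let $(l_n)$ and $(k_n)$ be sequences of positive integers such that $$\lim_{n\to\infty}\Big(1-\frac{1}{2^{l_n}}\Big)^{k_n}=1\quad\text{and}\quad \lim_{n\to\infty}\frac{k_nl_n}{2^{l_n}}=\infty.$$ Then the sequence of functions $f_n:\{-1,1\}^{l_nk_n}\to\{-1,0,1\}$, $f_n(\omega):=\mathsf{Tribes}(l_n,k_n)(\omega)-\mathsf{Tribes}(l_n,k_n)(-\omega)$, is bribable. Moreover, there is a sequence of positive integers $a_n\to\infty$ such that $\mathbb{P}[|\mathscr{P}_n|>a_n]\to1$, where $\mathscr{P}_n$ is the pivotal set of $\mathsf{Tribes}(l_n,k_n)$.
   Context: $\{-1,1\}^{m}$ carries the uniform product measure $\mathbb{P}$, $\omega$ uniform. $\mathsf{Tribes}(l,k):\{-1,1\}^{lk}\to\{0,1\}$: the $lk$ coordinates are partitioned into $k$ disjoint blocks ("tribes") of $l$ elements each; $\mathsf{Tribes}(l,k)(\omega)=1$ if there is a tribe $T$ with $\omega(i)=1$ for all $i\in T$, and $0$ otherwise. For $i$ a coordinate, $\omega^i$ is $\omega$ with the $i$-th coordinate flipped; the pivotal set of a function $g$ is $\{i: g(\omega)\neq g(\omega^i)\}$. A function $f$ on $\{-1,1\}^m$ is transitive if there is a group of permutations of the coordinates acting transitively under which $f$ is invariant. A sequence $f_n:\{-1,1\}^{m_n}\to\{-1,0,1\}$ is called bribable if: (1) each $f_n$ is transitive; (2) $\lim_n\mathbb{P}[f_n=0]=1$; (3) $\lim_n\mathbb{P}[\exists\, i,j\in[m_n]: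 f_n(\omega^i)=1\text{ and }f_n(\omega^j)=-1]=1$. *)

theory Defs
  imports "HOL-Analysis.Analysis" "HOL-Combinatorics.Permutations"
begin

definition cube :: "nat \<Rightarrow> (nat \<Rightarrow> int) set" where
  "cube m = PiE {0..<m} (\<lambda>_. {-1, 1})"

definition cprob :: "nat \<Rightarrow> ((nat \<Rightarrow> int) \<Rightarrow> bool) \<Rightarrow> real" where
  "cprob m P = real (card {\<omega> \<in> cube m. P \<omega>}) / real (card (cube m))"

definition flip :: "(nat \<Rightarrow> int) \<Rightarrow> nat \<Rightarrow> (nat \<Rightarrow> int)" where
  "flip \<omega> i = fun_upd \<omega> i (- \<omega> i)"

definition neg :: "nat \<Rightarrow> (nat \<Rightarrow> int) \<Rightarrow> (nat \<Rightarrow> int)" where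
  "neg m \<omega> = (\<lambda>i\<in>{0..<m}. - \<omega> i)"

definition tribes :: "nat \<Rightarrow> nat \<Rightarrow> (nat \<Rightarrow> int) \<Rightarrow> int" where
  "tribes l k \<omega> = (if \<exists>j<k. \<forall>i\<in>{j*l..<(j+1)*l}. \<omega> i = 1 then 1 else 0)"

definition pivotal :: "nat \<Rightarrow> ((nat \<Rightarrow> int) \<Rightarrow> int) \<Rightarrow> (nat \<Rightarrow> int) \<Rightarrow> nat set" where
  "pivotal m g \<omega> = {i \<in> {0..<m}. g \<omega> \<noteq> g (flip \<omega> i)}"

definition transitive_fun :: "nat \<Rightarrow> ((nat \<Rightarrow> int) \<Rightarrow> int) \<Rightarrow> bool" where
  "transitive_fun m f \<longleftrightarrow>
     (\<exists>G. G \<subseteq> {\<pi>. \<pi> permutes {0..<m}} \<and> id \<in> G \<and>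
          (\<forall>\<pi>\<in>G. \<forall>\<sigma>\<in>G. \<pi> \<circ> \<sigma> \<in> G) \<and> (\<forall>\<pi>\<in>G. inv \<pi> \<in> G) \<and>
          (\<forall>i<m. \<forall>j<m. \<exists>\<pi>\<in>G. \<pi> i = j) \<and>
          (\<forall>\<pi>\<in>G. \<forall>\<omega>\<in>cube m. f (restrict (\<omega> \<circ> \<pi>) {0..<m}) = f \<omega>))"

definition bribable :: "(nat \<Rightarrow> nat) \<Rightarrow> (nat \<Rightarrow> (nat \<Rightarrow> int) \<Rightarrow> int) \<Rightarrow> bool" where
  "bribable m f \<longleftrightarrow>
     (\<forall>n. \<forall>\<omega>\<in>cube (m n). f n \<omega> \<in> {-1, 0, 1}) \<and>
     (\<forall>n. transitive_fun (m n) (f n)) \<and>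
     (\<lambda>n. cprob (m n) (\<lambda>\<omega>. f n \<omega> = 0)) \<longlonglongrightarrow> 1 \<and>
     (\<lambda>n. cprob (m n) (\<lambda>\<omega>. \<exists>i<m n. \<exists>j<m n. f n (flip \<omega> i) = 1 \<and> f n (flip \<omega> j) = -1))
        \<longlonglongrightarrow> 1"

end

theory Submission
  imports Defs "HOL-Real_Asymp.Real_Asymp"
begin


lemma finite_cube: "finite (cube m)"
  unfolding cube_def by (simp add: finite_PiE)

lemma card_cube: "card (cube m) = 2 ^ m"
  unfolding cube_def by (simp add: card_PiE numeral_2_eq_2)

definition blk :: "nat \<Rightarrow> nat \<Rightarrow> (nat \<Rightarrow> int) \<Rightarrow> (nat \<Rightarrow> int)" where
  "blk l j \<omega> = (\<lambda>i\<in>{0..<l}. \<omega> (j*l+i))"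

lemma idx_lt: "j < k \<Longrightarrow> i < l \<Longrightarrow> j*l + i < l*(k::nat)"
proof -
  assume a: "j < k" "i < l"
  have "j*l + i < j*l + l" using a(2) by linarith
  also have "\<dots> = Suc j * l" by simp
  also have "\<dots> \<le> k * l" using a(1) by (intro mult_le_mono1) simp
  finally show ?thesis by (simp add: mult.commute)
qed

lemma blk_cube: "\<omega> \<in> cube (l*k) \<Longrightarrow> j < k \<Longrightarrow> blk l j \<omega> \<in> cube l"
  using idx_lt[of j k _ l] unfolding cube_def blk_def by (auto simp: PiE_iff)

lemma prod_count:
  "card {\<omega>\<in>cube (l*k). \<forall>j<k. Q j (blk l j \<omega>)} = (\<Prod>j<k. card {\<sigma>\<in>cube l. Q j \<sigma>})"
proof (induction k)
  case 0
  have "cube (l*0) = {\<lambda>_. undefined}" unfolding cube_def by simp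
  then show ?case by simp
next
  case (Suc k)
  define S where "S k = {\<omega>\<in>cube (l*k). \<forall>j<k. Q j (blk l j \<omega>)}" for k
  define C where "C = {\<sigma>\<in>cube l. Q k \<sigma>}"
  define \<phi> where "\<phi> \<omega> = (restrict \<omega> {0..<l*k}, blk l k \<omega>)" for \<omega> :: "nat \<Rightarrow> int"
  have bij: "bij_betw \<phi> (S (Suc k)) (S k \<times> C)"
    unfolding bij_betw_def
  proof
    show "inj_on \<phi> (S (Suc k))"
    proof (rule inj_onI)
      fix \<omega> \<omega>' assume w: "\<omega> \<in> S (Suc k)" "\<omega>' \<in> S (Suc k)" and e: "\<phi> \<omega> = \<phi> \<omega>'"
      show "\<omega> = \<omega>'"
      proof
        fix x
        show "\<omega> x = \<omega>' x"
        proof (cases "x < l*k")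
          case True
          then show ?thesis using e unfolding \<phi>_def by (metis atLeastLessThan_iff le0 prod.inject restrict_apply')
        next
          case False
          show ?thesis
          proof (cases "x < l * Suc k")
            case True
            define i where "i = x - l*k"
            have i: "i < l" "x = k*l + i" using True False unfolding i_def by (auto simp: mult.commute)
            have "blk l k \<omega> i = blk l k \<omega>' i" using e unfolding \<phi>_def by simp
            then show ?thesis using i unfolding blk_def by simp
          next
            case F2: False
            then show ?thesis using w unfolding S_def cube_def
              by (auto simp: PiE_def extensional_def)
          qed
        qed
      qed
    qed
  next
    show "\<phi> ` S (Suc k) = S k \<times> C"
    proof
      show "\<phi> ` S (Suc k) \<subseteq> S k \<times> C"
      proof
        fix y assume "y \<in> \<phi> ` S (Suc k)"
        then obtain \<omega> where w: "\<omega> \<in> S (Suc k)" and y: "y = \<phi> \<omega>" by auto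
        have wc: "\<omega> \<in> cube (l * Suc k)" and wq: "\<forall>j<Suc k. Q j (blk l j \<omega>)" using w unfolding S_def by auto
        have "restrict \<omega> {0..<l*k} \<in> cube (l*k)" using wc unfolding cube_def
          by (auto simp: PiE_iff)
        moreover have "blk l j (restrict \<omega> {0..<l*k}) = blk l j \<omega>" if "j < k" for j
          unfolding blk_def using idx_lt[OF that] by auto
        moreover have "blk l k \<omega> \<in> cube l" using blk_cube[OF wc] by simp
        ultimately show "y \<in> S k \<times> C" using wq unfolding y \<phi>_def S_def C_def by auto
      qed
    next
      show "S k \<times> C \<subseteq> \<phi> ` S (Suc k)"
      proof
        fix y assume "y \<in> S k \<times> C"
        then obtain \<alpha> \<beta> where y: "y = (\<alpha>, \<beta>)" and a: "\<alpha> \<in> S k" and b: "\<beta> \<in> C" by auto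
        define \<omega> where "\<omega> x = (if x < l*k then \<alpha> x else if x < l * Suc k then \<beta> (x - l*k) else undefined)" for x
        have ac: "\<alpha> \<in> cube (l*k)" and aq: "\<forall>j<k. Q j (blk l j \<alpha>)" using a unfolding S_def by auto
        have bc: "\<beta> \<in> cube l" and bq: "Q k \<beta>" using b unfolding C_def by auto
        have wc: "\<omega> \<in> cube (l * Suc k)" using ac bc unfolding cube_def \<omega>_def
          by (auto simp: PiE_iff extensional_def)
        have r: "restrict \<omega> {0..<l*k} = \<alpha>" using ac unfolding cube_def \<omega>_def
          by (auto simp: PiE_iff extensional_def)
        have bk: "blk l k \<omega> = \<beta>" using bc unfolding cube_def \<omega>_def blk_def
          by (auto simp: PiE_iff extensional_def)
        have bj: "blk l j \<omega> = blk l j \<alpha>" if "j < k" for j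
          unfolding blk_def \<omega>_def using idx_lt[OF that] by auto
        have "\<forall>j<Suc k. Q j (blk l j \<omega>)" using aq bq bk bj by (auto simp: less_Suc_eq)
        then have "\<omega> \<in> S (Suc k)" using wc unfolding S_def by auto
        moreover have "\<phi> \<omega> = y" unfolding \<phi>_def y using r bk by simp
        ultimately show "y \<in> \<phi> ` S (Suc k)" by blast
      qed
    qed
  qed
  have "card (S (Suc k)) = card (S k \<times> C)" using bij_betw_same_card[OF bij] .
  also have "\<dots> = card (S k) * card C" by (simp add: card_cartesian_product)
  finally show ?case using Suc.IH unfolding S_def C_def by simp
qed


lemma cprob_prod:
  "cprob (l*k) (\<lambda>\<omega>. \<forall>j<k. Q j (blk l j \<omega>)) = (\<Prod>j<k. real (card {\<sigma>\<in>cube l. Q j \<sigma>}) / 2^l)"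
proof -
  have "cprob (l*k) (\<lambda>\<omega>. \<forall>j<k. Q j (blk l j \<omega>)) = (\<Prod>j<k. real (card {\<sigma>\<in>cube l. Q j \<sigma>})) / (2^l)^k"
    unfolding cprob_def prod_count card_cube by (simp add: power_mult)
  also have "\<dots> = (\<Prod>j<k. real (card {\<sigma>\<in>cube l. Q j \<sigma>}) / 2^l)"
    by (simp add: prod_dividef)
  finally show ?thesis .
qed

lemma cprob_nonneg: "cprob m P \<ge> 0"
  unfolding cprob_def by simp

lemma cprob_le1: "cprob m P \<le> 1"
proof -
  have "card {\<omega>\<in>cube m. P \<omega>} \<le> card (cube m)" by (intro card_mono finite_cube) auto
  moreover have "card (cube m) > 0" by (simp add: card_cube)
  ultimately show ?thesis unfolding cprob_def by simp
qed

lemma cprob_mono: "(\<And>\<omega>. \<omega> \<in> cube m \<Longrightarrow> P \<omega> \<Longrightarrow> P' \<omega>) \<Longrightarrow> cprob m P \<le> cprob m P'"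
proof -
  assume a: "\<And>\<omega>. \<omega> \<in> cube m \<Longrightarrow> P \<omega> \<Longrightarrow> P' \<omega>"
  have "card {\<omega>\<in>cube m. P \<omega>} \<le> card {\<omega>\<in>cube m. P' \<omega>}" using a by (intro card_mono) (auto simp: finite_cube)
  then show ?thesis unfolding cprob_def by (simp add: divide_right_mono)
qed

lemma cprob_compl: "cprob m (\<lambda>\<omega>. \<not> P \<omega>) = 1 - cprob m P"
proof -
  have e: "{\<omega>\<in>cube m. \<not> P \<omega>} = cube m - {\<omega>\<in>cube m. P \<omega>}" by auto
  have sub: "{\<omega>\<in>cube m. P \<omega>} \<subseteq> cube m" by auto
  have le: "card {\<omega>\<in>cube m. P \<omega>} \<le> card (cube m)" by (rule card_mono[OF finite_cube sub])
  have "card {\<omega>\<in>cube m. \<not> P \<omega>} = card (cube m) - card {\<omega>\<in>cube m. P \<omega>}"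
    unfolding e by (rule card_Diff_subset) (use finite_cube sub finite_subset in blast)+
  then have "real (card {\<omega>\<in>cube m. \<not> P \<omega>}) = real (card (cube m)) - real (card {\<omega>\<in>cube m. P \<omega>})"
    using le by simp
  moreover have "card (cube m) > 0" by (simp add: card_cube)
  ultimately show ?thesis unfolding cprob_def by (simp add: diff_divide_distrib)
qed

lemma cprob_disj: "cprob m (\<lambda>\<omega>. P \<omega> \<or> P' \<omega>) \<le> cprob m P + cprob m P'"
proof -
  have "{\<omega>\<in>cube m. P \<omega> \<or> P' \<omega>} = {\<omega>\<in>cube m. P \<omega>} \<union> {\<omega>\<in>cube m. P' \<omega>}" by auto
  then have "card {\<omega>\<in>cube m. P \<omega> \<or> P' \<omega>} \<le> card {\<omega>\<in>cube m. P \<omega>} + card {\<omega>\<in>cube m. P' \<omega>}"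
    by (simp add: card_Un_le)
  then show ?thesis unfolding cprob_def by (simp add: add_divide_distrib[symmetric] divide_right_mono)
qed

lemma cprob_Ex: "cprob m (\<lambda>\<omega>. \<exists>g<(G::nat). P g \<omega>) \<le> (\<Sum>g<G. cprob m (P g))"
proof -
  have "{\<omega>\<in>cube m. \<exists>g<G. P g \<omega>} = (\<Union>g<G. {\<omega>\<in>cube m. P g \<omega>})" by auto
  moreover have "card (\<Union>g<G. {\<omega>\<in>cube m. P g \<omega>}) \<le> (\<Sum>g<G. card {\<omega>\<in>cube m. P g \<omega>})"
    by (rule card_UN_le) simp
  ultimately have "card {\<omega>\<in>cube m. \<exists>g<G. P g \<omega>} \<le> (\<Sum>g<G. card {\<omega>\<in>cube m. P g \<omega>})"
    by simp
  then have 1: "real (card {\<omega>\<in>cube m. \<exists>g<G. P g \<omega>}) \<le> (\<Sum>g<G. real (card {\<omega>\<in>cube m. P g \<omega>}))"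
    unfolding of_nat_sum[symmetric] of_nat_le_iff .
  have "(\<Sum>g<G. cprob m (P g)) = (\<Sum>g<G. real (card {\<omega>\<in>cube m. P g \<omega>})) / real (card (cube m))"
    unfolding cprob_def by (rule sum_divide_distrib[symmetric])
  then show ?thesis unfolding cprob_def[of m "\<lambda>\<omega>. \<exists>g<G. P g \<omega>"]
    using divide_right_mono[OF 1, of "real (card (cube m))"] by simp
qed

lemma card_neg_cube: "card {\<sigma>\<in>cube l. \<not> P \<sigma>} = 2^l - card {\<sigma>\<in>cube l. P \<sigma>}"
proof -
  have "{\<sigma>\<in>cube l. \<not> P \<sigma>} = cube l - {\<sigma>\<in>cube l. P \<sigma>}" by auto
  then show ?thesis by (simp add: card_Diff_subset finite_cube card_cube)
qed





definition all1 :: "nat \<Rightarrow> (nat \<Rightarrow> int) \<Rightarrow> bool" where "all1 l \<sigma> = (\<forall>i<l. \<sigma> i = 1)"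
definition allm :: "nat \<Rightarrow> (nat \<Rightarrow> int) \<Rightarrow> bool" where "allm l \<sigma> = (\<forall>i<l. \<sigma> i = -1)"
definition oneA :: "nat \<Rightarrow> (nat \<Rightarrow> int) \<Rightarrow> bool" where
  "oneA l \<sigma> = (\<exists>t<l. \<sigma> t = -1 \<and> (\<forall>i<l. i \<noteq> t \<longrightarrow> \<sigma> i = 1))"
definition oneB :: "nat \<Rightarrow> (nat \<Rightarrow> int) \<Rightarrow> bool" where
  "oneB l \<sigma> = (\<exists>t<l. \<sigma> t = 1 \<and> (\<forall>i<l. i \<noteq> t \<longrightarrow> \<sigma> i = -1))"

lemma card_const: "card {\<sigma>\<in>cube l. \<forall>i<l. \<sigma> i = c} = 1" if "c \<in> {-1,1}"
proof -
  have "{\<sigma>\<in>cube l. \<forall>i<l. \<sigma> i = c} = {\<lambda>i\<in>{0..<l}. c}"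
    using that unfolding cube_def by (auto simp: PiE_iff extensional_def)
  then show ?thesis by simp
qed

lemma card_all1: "card {\<sigma>\<in>cube l. \<not> all1 l \<sigma>} = 2^l - 1"
  unfolding all1_def card_neg_cube using card_const[of 1 l] by simp

lemma card_allm: "card {\<sigma>\<in>cube l. \<not> allm l \<sigma>} = 2^l - 1"
  unfolding allm_def card_neg_cube using card_const[of "-1" l] by simp

lemma card_one: "card {\<sigma>\<in>cube l. \<exists>t<l. \<sigma> t = -c \<and> (\<forall>i<l. i \<noteq> t \<longrightarrow> \<sigma> i = c)} = l" if "c \<in> {-1,1}"
proof -
  define h where "h t = (\<lambda>i\<in>{0..<l}. if i = t then -c else c)" for t
  have "{\<sigma>\<in>cube l. \<exists>t<l. \<sigma> t = -c \<and> (\<forall>i<l. i \<noteq> t \<longrightarrow> \<sigma> i = c)} = h ` {0..<l}"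
  proof (rule set_eqI, rule iffI)
    fix \<sigma> assume "\<sigma> \<in> {\<sigma>\<in>cube l. \<exists>t<l. \<sigma> t = -c \<and> (\<forall>i<l. i \<noteq> t \<longrightarrow> \<sigma> i = c)}"
    then obtain t where t: "t < l" "\<sigma> t = -c" "\<forall>i<l. i \<noteq> t \<longrightarrow> \<sigma> i = c" and s: "\<sigma> \<in> cube l" by auto
    have "\<sigma> = h t"
    proof
      fix i show "\<sigma> i = h t i" using t s unfolding h_def cube_def by (auto simp: PiE_iff extensional_def)
    qed
    then show "\<sigma> \<in> h ` {0..<l}" using t by auto
  next
    fix \<sigma> assume "\<sigma> \<in> h ` {0..<l}"
    then obtain t where t: "t < l" "\<sigma> = h t" by auto
    then show "\<sigma> \<in> {\<sigma>\<in>cube l. \<exists>t<l. \<sigma> t = -c \<and> (\<forall>i<l. i \<noteq> t \<longrightarrow> \<sigma> i = c)}"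
      using that unfolding h_def cube_def by (auto simp: PiE_iff)
  qed
  moreover have "inj_on h {0..<l}"
  proof (rule inj_onI)
    fix s t assume "s \<in> {0..<l}" "t \<in> {0..<l}" "h s = h t"
    then have "h s s = h t s" by simp
    then show "s = t" using \<open>s \<in> {0..<l}\<close> that unfolding h_def by (auto split: if_splits)
  qed
  ultimately show ?thesis by (simp add: card_image)
qed

lemma card_oneA: "card {\<sigma>\<in>cube l. \<not> oneA l \<sigma>} = 2^l - l"
  unfolding oneA_def card_neg_cube using card_one[of 1 l] by simp

lemma card_oneB: "card {\<sigma>\<in>cube l. \<not> oneB l \<sigma>} = 2^l - l"
  unfolding oneB_def card_neg_cube using card_one[of "-1" l] by simp




lemma tribes_iff: "tribes l k \<omega> = (if \<exists>j<k. all1 l (blk l j \<omega>) then 1 else 0)"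
proof -
  have "(\<forall>i\<in>{j*l..<(j+1)*l}. \<omega> i = 1) \<longleftrightarrow> all1 l (blk l j \<omega>)" for j
  proof
    assume "\<forall>i\<in>{j*l..<(j+1)*l}. \<omega> i = 1"
    then show "all1 l (blk l j \<omega>)" unfolding all1_def blk_def by auto
  next
    assume a: "all1 l (blk l j \<omega>)"
    show "\<forall>i\<in>{j*l..<(j+1)*l}. \<omega> i = 1"
    proof
      fix i assume "i \<in> {j*l..<(j+1)*l}"
      then have "i - j*l < l" "i = j*l + (i - j*l)" by auto
      then show "\<omega> i = 1" using a unfolding all1_def blk_def by (metis atLeastLessThan_iff le0 restrict_apply')
    qed
  qed
  then show ?thesis unfolding tribes_def by simp
qed

lemma tribes_neg: "tribes l k (neg (l*k) \<omega>) = (if \<exists>j<k. allm l (blk l j \<omega>) then 1 else 0)"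
proof -
  have "all1 l (blk l j (neg (l*k) \<omega>)) \<longleftrightarrow> allm l (blk l j \<omega>)" if "j < k" for j
    unfolding all1_def allm_def blk_def neg_def using idx_lt[OF that] by auto
  then show ?thesis unfolding tribes_iff by auto
qed

lemma mod_shift: "0 < (l::nat) \<Longrightarrow> ((x + (l - b mod l)) mod l + b) mod l = x mod l"
proof -
  assume l: "0 < l"
  have "b mod l < l" using l by simp
  moreover have "b div l * l + b mod l = b" by (rule div_mult_mod_eq)
  ultimately have e0: "(l - b mod l) + b = l + b div l * l" by linarith
  have e: "(l - b mod l) + b = (1 + b div l) * l" unfolding e0 by simp
  have "((x + (l - b mod l)) mod l + b) mod l = (x + (l - b mod l) + b) mod l" by (simp add: mod_add_left_eq)
  also have "\<dots> = (x + (1 + b div l) * l) mod l" by (simp only: add.assoc e)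
  also have "\<dots> = x mod l" by (rule mod_mult_self1)
  finally show ?thesis .
qed

lemma all_shift: "0 < (l::nat) \<Longrightarrow> (\<forall>i<l. P ((i+b) mod l)) \<longleftrightarrow> (\<forall>i<l. P i)"
proof
  assume l: "0 < l" and a: "\<forall>i<l. P ((i+b) mod l)"
  show "\<forall>i<l. P i"
  proof (intro allI impI)
    fix i assume i: "i < l"
    have "((i + (l - b mod l)) mod l + b) mod l = i" using mod_shift[OF l] i by simp
    moreover have "(i + (l - b mod l)) mod l < l" using l by simp
    ultimately show "P i" using a by metis
  qed
next
  assume l: "0 < l" and a: "\<forall>i<l. P i"
  then show "\<forall>i<l. P ((i+b) mod l)" by simp
qed

lemma ex_shift: "0 < (l::nat) \<Longrightarrow> (\<exists>i<l. P ((i+b) mod l)) \<longleftrightarrow> (\<exists>i<l. P i)"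
  using all_shift[of l "\<lambda>x. \<not> P x" b] by blast

definition sh :: "nat \<Rightarrow> nat \<Rightarrow> nat \<Rightarrow> nat \<Rightarrow> nat \<Rightarrow> nat" where
  "sh l k a b i = (if i < l*k then ((i div l + a) mod k)*l + (i mod l + b) mod l else i)"

lemma sh_lt: "0 < l \<Longrightarrow> 0 < k \<Longrightarrow> i < l*k \<Longrightarrow> sh l k a b i < l*k"
  unfolding sh_def by (simp add: idx_lt)

lemma sh_in: "0 < l \<Longrightarrow> 0 < k \<Longrightarrow> j < k \<Longrightarrow> i < l \<Longrightarrow> sh l k a b (j*l+i) = ((j + a) mod k)*l + (i + b) mod l"
  unfolding sh_def using idx_lt[of j k i l] by simp

lemma sh_comp: "0 < l \<Longrightarrow> 0 < k \<Longrightarrow> sh l k a b (sh l k a' b' i) = sh l k (a+a') (b+b') i"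
proof -
  assume l: "0 < l" and k: "0 < k"
  show ?thesis
  proof (cases "i < l*k")
    case True
    define q where "q = (i div l + a') mod k"
    define r where "r = (i mod l + b') mod l"
    have q: "q < k" and r: "r < l" unfolding q_def r_def using l k by auto
    have "sh l k a' b' i = q*l + r" unfolding sh_def q_def r_def using True by simp
    then have "sh l k a b (sh l k a' b' i) = ((q + a) mod k)*l + (r + b) mod l" using sh_in[OF l k q r] by simp
    also have "\<dots> = ((i div l + (a+a')) mod k)*l + (i mod l + (b+b')) mod l"
    proof -
      have e1: "((i div l + a') mod k + a) mod k = (i div l + (a + a')) mod k"
        by (metis add.assoc add.commute mod_add_left_eq)
      have e2: "((i mod l + b') mod l + b) mod l = (i mod l + (b + b')) mod l"
        by (metis add.assoc add.commute mod_add_left_eq)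
      show ?thesis unfolding q_def r_def e1 e2 ..
    qed
    also have "\<dots> = sh l k (a+a') (b+b') i" unfolding sh_def using True by simp
    finally show ?thesis .
  next
    case False
    then show ?thesis unfolding sh_def by simp
  qed
qed

lemma sh_id: "0 < l \<Longrightarrow> 0 < k \<Longrightarrow> sh l k (c*k) (d*l) = id"
proof
  fix i assume l: "0 < l" and k: "0 < k"
  show "sh l k (c*k) (d*l) i = id i"
  proof (cases "i < l*k")
    case True
    then have "i div l < k" using l by (simp add: div_less_iff_less_mult mult.commute)
    then show ?thesis unfolding sh_def using True by simp
  qed (simp add: sh_def)
qed

lemma sh_inv_comp: "0 < l \<Longrightarrow> 0 < k \<Longrightarrow> sh l k a b \<circ> sh l k (k - a mod k) (l - b mod l) = id"
proof -
  assume l: "0 < l" and k: "0 < k"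
  have "a mod k < k" using k by simp
  moreover have "a div k * k + a mod k = a" by (rule div_mult_mod_eq)
  ultimately have ea0: "a + (k - a mod k) = k + a div k * k" by linarith
  have ea: "a + (k - a mod k) = (a div k + 1) * k" unfolding ea0 by simp
  have "b mod l < l" using l by simp
  moreover have "b div l * l + b mod l = b" by (rule div_mult_mod_eq)
  ultimately have eb0: "b + (l - b mod l) = l + b div l * l" by linarith
  have eb: "b + (l - b mod l) = (b div l + 1) * l" unfolding eb0 by simp
  have "sh l k a b \<circ> sh l k (k - a mod k) (l - b mod l) = sh l k (a + (k - a mod k)) (b + (l - b mod l))"
    using sh_comp[OF l k] by (simp add: fun_eq_iff)
  also have "\<dots> = id" unfolding ea eb by (rule sh_id[OF l k])
  finally show ?thesis .
qed

lemma sh_inv_comp2: "0 < l \<Longrightarrow> 0 < k \<Longrightarrow> sh l k (k - a mod k) (l - b mod l) \<circ> sh l k a b = id"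
proof -
  assume l: "0 < l" and k: "0 < k"
  have "sh l k (k - a mod k) (l - b mod l) \<circ> sh l k a b = sh l k a b \<circ> sh l k (k - a mod k) (l - b mod l)"
    using sh_comp[OF l k] by (simp add: comp_def fun_eq_iff add.commute)
  then show ?thesis using sh_inv_comp[OF l k] by simp
qed

lemma sh_permutes: "0 < l \<Longrightarrow> 0 < k \<Longrightarrow> sh l k a b permutes {0..<l*k}"
proof -
  assume l: "0 < l" and k: "0 < k"
  let ?g = "sh l k (k - a mod k) (l - b mod l)"
  have "bij_betw (sh l k a b) {0..<l*k} {0..<l*k}"
  proof (rule bij_betw_byWitness[where f' = ?g])
    show "\<forall>x\<in>{0..<l*k}. ?g (sh l k a b x) = x" using sh_inv_comp2[OF l k] by (simp add: fun_eq_iff)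
    show "\<forall>x\<in>{0..<l*k}. sh l k a b (?g x) = x" using sh_inv_comp[OF l k] by (simp add: fun_eq_iff)
    show "sh l k a b ` {0..<l*k} \<subseteq> {0..<l*k}" using sh_lt[OF l k] by auto
    show "?g ` {0..<l*k} \<subseteq> {0..<l*k}" using sh_lt[OF l k] by auto
  qed
  then show ?thesis by (rule bij_imp_permutes) (simp add: sh_def)
qed

lemma tribes_sh: "0 < l \<Longrightarrow> 0 < k \<Longrightarrow> tribes l k (restrict (\<omega> \<circ> sh l k a b) {0..<l*k}) = tribes l k \<omega>"
proof -
  assume l: "0 < l" and k: "0 < k"
  have "all1 l (blk l j (restrict (\<omega> \<circ> sh l k a b) {0..<l*k})) \<longleftrightarrow>
        (\<forall>i<l. \<omega> (((j + a) mod k)*l + (i + b) mod l) = 1)" if "j < k" for j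
    unfolding all1_def blk_def using idx_lt[OF that] sh_in[OF l k that] by auto
  also have "\<dots> j \<longleftrightarrow> all1 l (blk l ((j + a) mod k) \<omega>)" for j
    using all_shift[OF l, of "\<lambda>i. \<omega> (((j + a) mod k)*l + i) = 1" b] unfolding all1_def blk_def by auto
  finally have "(\<exists>j<k. all1 l (blk l j (restrict (\<omega> \<circ> sh l k a b) {0..<l*k}))) \<longleftrightarrow>
      (\<exists>j<k. all1 l (blk l ((j + a) mod k) \<omega>))" by auto
  also have "\<dots> \<longleftrightarrow> (\<exists>j<k. all1 l (blk l j \<omega>))" by (rule ex_shift[OF k])
  finally show ?thesis unfolding tribes_iff by simp
qed

lemma trans_f: "0 < l \<Longrightarrow> 0 < k \<Longrightarrow>
  transitive_fun (l*k) (\<lambda>\<omega>. tribes l k \<omega> - tribes l k (neg (l*k) \<omega>))"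
proof -
  assume l: "0 < l" and k: "0 < k"
  define G where "G = {sh l k a b | a b. True}"
  have "G \<subseteq> {\<pi>. \<pi> permutes {0..<l*k}}" unfolding G_def using sh_permutes[OF l k] by auto
  moreover have "id \<in> G"
  proof -
    have "id = sh l k 0 0" using sh_id[OF l k, of 0 0] by simp
    then show ?thesis unfolding G_def by blast
  qed
  moreover have "\<forall>\<pi>\<in>G. \<forall>\<sigma>\<in>G. \<pi> \<circ> \<sigma> \<in> G" unfolding G_def using sh_comp[OF l k]
    by (auto simp: comp_def fun_eq_iff) blast
  moreover have "\<forall>\<pi>\<in>G. inv \<pi> \<in> G" unfolding G_def
    using inv_unique_comp[OF sh_inv_comp[OF l k] sh_inv_comp2[OF l k]] by auto
  moreover have "\<forall>i<l*k. \<forall>j<l*k. \<exists>\<pi>\<in>G. \<pi> i = j"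
  proof (intro allI impI)
    fix i j assume i: "i < l*k" and j: "j < l*k"
    have di: "i div l < k" and dj: "j div l < k" using i j l by (auto simp: div_less_iff_less_mult mult.commute)
    have "sh l k (j div l + (k - i div l)) (j mod l + (l - i mod l)) i = j"
    proof -
      have "(i div l + (j div l + (k - i div l))) mod k = j div l"
        using di dj by (simp add: add.commute add.left_commute)
      moreover have "(i mod l + (j mod l + (l - i mod l))) mod l = j mod l"
      proof -
        have "i mod l < l" using l by simp
        then have "i mod l + (j mod l + (l - i mod l)) = j mod l + l" by linarith
        then show ?thesis by simp
      qed
      ultimately show ?thesis unfolding sh_def using i by simp
    qed
    then show "\<exists>\<pi>\<in>G. \<pi> i = j" unfolding G_def by blast
  qed
  moreover have "\<forall>\<pi>\<in>G. \<forall>\<omega>\<in>cube (l*k). (\<lambda>\<omega>. tribes l k \<omega> - tribes l k (neg (l*k) \<omega>)) (restrict (\<omega> \<circ> \<pi>) {0..<l*k})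
       = (\<lambda>\<omega>. tribes l k \<omega> - tribes l k (neg (l*k) \<omega>)) \<omega>"
  proof (intro ballI)
    fix \<pi> \<omega> assume "\<pi> \<in> G" "\<omega> \<in> cube (l*k)"
    then obtain a b where p: "\<pi> = sh l k a b" unfolding G_def by auto
    have "neg (l*k) (restrict (\<omega> \<circ> \<pi>) {0..<l*k}) = restrict (neg (l*k) \<omega> \<circ> \<pi>) {0..<l*k}"
      unfolding neg_def p using sh_lt[OF l k] by (auto simp: fun_eq_iff)
    then show "(\<lambda>\<omega>. tribes l k \<omega> - tribes l k (neg (l*k) \<omega>)) (restrict (\<omega> \<circ> \<pi>) {0..<l*k})
       = (\<lambda>\<omega>. tribes l k \<omega> - tribes l k (neg (l*k) \<omega>)) \<omega>"
      unfolding p using tribes_sh[OF l k] by simp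
  qed
  ultimately show ?thesis unfolding transitive_fun_def by blast
qed




lemma blk_flip_other: "j' \<noteq> j \<Longrightarrow> t < L \<Longrightarrow> blk L j' (flip \<omega> (j*L+t)) = blk L j' \<omega>"
proof -
  assume a: "j' \<noteq> j" "t < L"
  have "j'*L + i \<noteq> j*L + t" if "i < L" for i
  proof
    assume "j'*L + i = j*L + t"
    then have "(j'*L + i) div L = (j*L + t) div L" by simp
    then show False using a that by simp
  qed
  then show ?thesis unfolding blk_def flip_def by (auto simp: fun_eq_iff)
qed

lemma blk_flip_same: "t < L \<Longrightarrow> blk L j (flip \<omega> (j*L+t)) = (blk L j \<omega>)(t := - \<omega> (j*L+t))"
  unfolding blk_def flip_def by (auto simp: fun_eq_iff)

lemma flipA:
  assumes "j < K" "oneA L (blk L j \<omega>)"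
  shows "\<exists>t<L. all1 L (blk L j (flip \<omega> (j*L+t))) \<and> \<not> allm L (blk L j (flip \<omega> (j*L+t)))"
proof -
  obtain t where t: "t < L" "blk L j \<omega> t = -1" "\<forall>i<L. i \<noteq> t \<longrightarrow> blk L j \<omega> i = 1"
    using assms(2) unfolding oneA_def by auto
  have w: "\<omega> (j*L+t) = -1" using t unfolding blk_def by simp
  show ?thesis
    using t w blk_flip_same[OF t(1), of j \<omega>] unfolding all1_def allm_def by (intro exI[of _ t]) auto
qed

lemma flipB:
  assumes "j < K" "oneB L (blk L j \<omega>)"
  shows "\<exists>t<L. allm L (blk L j (flip \<omega> (j*L+t))) \<and> \<not> all1 L (blk L j (flip \<omega> (j*L+t)))"
proof -
  obtain t where t: "t < L" "blk L j \<omega> t = 1" "\<forall>i<L. i \<noteq> t \<longrightarrow> blk L j \<omega> i = -1"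
    using assms(2) unfolding oneB_def by auto
  have w: "\<omega> (j*L+t) = 1" using t unfolding blk_def by simp
  show ?thesis
    using t w blk_flip_same[OF t(1), of j \<omega>] unfolding all1_def allm_def by (intro exI[of _ t]) auto
qed

lemma bribe_event:
  assumes "j1 < K" "oneA L (blk L j1 \<omega>)" "j2 < K" "oneB L (blk L j2 \<omega>)"
    and n1: "\<forall>j<K. \<not> all1 L (blk L j \<omega>)" and nm: "\<forall>j<K. \<not> allm L (blk L j \<omega>)"
  shows "\<exists>i<L*K. \<exists>j<L*K. tribes L K (flip \<omega> i) - tribes L K (neg (L*K) (flip \<omega> i)) = 1 \<and>
            tribes L K (flip \<omega> j) - tribes L K (neg (L*K) (flip \<omega> j)) = -1"
proof -
  obtain t1 where t1: "t1 < L" "all1 L (blk L j1 (flip \<omega> (j1*L+t1)))" "\<not> allm L (blk L j1 (flip \<omega> (j1*L+t1)))"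
    using flipA[OF assms(1,2)] by auto
  obtain t2 where t2: "t2 < L" "allm L (blk L j2 (flip \<omega> (j2*L+t2)))" "\<not> all1 L (blk L j2 (flip \<omega> (j2*L+t2)))"
    using flipB[OF assms(3,4)] by auto
  have a1: "tribes L K (flip \<omega> (j1*L+t1)) = 1" using t1 assms(1) unfolding tribes_iff by auto
  have "\<not> allm L (blk L j (flip \<omega> (j1*L+t1)))" if "j < K" for j
    using t1 nm that blk_flip_other[OF _ t1(1), of j j1 \<omega>] by (cases "j = j1") auto
  then have b1: "tribes L K (neg (L*K) (flip \<omega> (j1*L+t1))) = 0" unfolding tribes_neg by auto
  have a2: "tribes L K (neg (L*K) (flip \<omega> (j2*L+t2))) = 1" using t2 assms(3) unfolding tribes_neg by auto
  have "\<not> all1 L (blk L j (flip \<omega> (j2*L+t2)))" if "j < K" for j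
    using t2 n1 that blk_flip_other[OF _ t2(1), of j j2 \<omega>] by (cases "j = j2") auto
  then have b2: "tribes L K (flip \<omega> (j2*L+t2)) = 0" unfolding tribes_iff by auto
  show ?thesis
    using a1 b1 a2 b2 idx_lt[OF assms(1) t1(1)] idx_lt[OF assms(3) t2(1)] by fastforce
qed

lemma pivot_event:
  assumes "j < K" "oneA L (blk L j \<omega>)" "\<forall>j<K. \<not> all1 L (blk L j \<omega>)"
  shows "\<exists>i. i \<in> pivotal (L*K) (tribes L K) \<omega> \<and> i div L = j"
proof -
  obtain t where t: "t < L" "all1 L (blk L j (flip \<omega> (j*L+t)))"
    using flipA[OF assms(1,2)] by auto
  have "tribes L K (flip \<omega> (j*L+t)) = 1" using t assms(1) unfolding tribes_iff by auto
  moreover have "tribes L K \<omega> = 0" using assms(3) unfolding tribes_iff by auto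
  ultimately have "j*L+t \<in> pivotal (L*K) (tribes L K) \<omega>"
    unfolding pivotal_def using idx_lt[OF assms(1) t(1)] by auto
  moreover have "(j*L+t) div L = j" using t by simp
  ultimately show ?thesis by blast
qed

lemma pivot_count:
  assumes "0 < L"
    and g: "\<forall>g<G. \<exists>j<K. g * sz \<le> j \<and> j < g * sz+sz \<and> oneA L (blk L j \<omega>)"
    and n1: "\<forall>j<K. \<not> all1 L (blk L j \<omega>)"
  shows "G \<le> card (pivotal (L*K) (tribes L K) \<omega>)"
proof -
  have "\<forall>g\<in>{..<G}. \<exists>i. i \<in> pivotal (L*K) (tribes L K) \<omega> \<and> g * sz \<le> i div L \<and> i div L < g * sz+sz"
  proof
    fix g assume "g \<in> {..<G}"
    then obtain j where j: "j < K" "g * sz \<le> j" "j < g * sz+sz" "oneA L (blk L j \<omega>)" using g by auto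
    then show "\<exists>i. i \<in> pivotal (L*K) (tribes L K) \<omega> \<and> g * sz \<le> i div L \<and> i div L < g * sz+sz"
      using pivot_event[OF j(1) j(4) n1] by auto
  qed
  then obtain h where h: "\<And>g. g \<in> {..<G} \<Longrightarrow> h g \<in> pivotal (L*K) (tribes L K) \<omega> \<and> g * sz \<le> h g div L \<and> h g div L < g * sz+sz"
    by metis
  have inj: "inj_on h {..<G}"
  proof (rule inj_onI)
    fix g g' assume a: "g \<in> {..<G}" "g' \<in> {..<G}" "h g = h g'"
    have "g * sz \<le> h g div L" "h g div L < g * sz+sz" "g' * sz \<le> h g div L" "h g div L < g' * sz+sz"
      using h[OF a(1)] h[OF a(2)] a(3) by auto
    then have "g * sz < g' * sz + sz" "g' * sz < g * sz + sz" by linarith+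
    then have "g * sz < (g'+1) * sz" "g' * sz < (g+1) * sz" by (simp_all add: algebra_simps)
    then have "g < g'+1" "g' < g+1" using mult_less_cancel2 by blast+
    then show "g = g'" by simp
  qed
  have "h ` {..<G} \<subseteq> pivotal (L*K) (tribes L K) \<omega>" using h by auto
  moreover have "finite (pivotal (L*K) (tribes L K) \<omega>)" unfolding pivotal_def by simp
  ultimately have "card (h ` {..<G}) \<le> card (pivotal (L*K) (tribes L K) \<omega>)" by (rule card_mono[rotated])
  then show ?thesis using card_image[OF inj] by simp
qed




lemma prob_all1: "cprob (L*K) (\<lambda>\<omega>. \<forall>j<K. \<not> all1 L (blk L j \<omega>)) = (1 - 1/2^L)^K"
proof -
  have "real (card {\<sigma>\<in>cube L. \<not> all1 L \<sigma>}) / 2^L = 1 - 1/2^L"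
    unfolding card_all1 by (simp add: of_nat_diff diff_divide_distrib)
  then show ?thesis using cprob_prod[of L K "\<lambda>j \<sigma>. \<not> all1 L \<sigma>"] by simp
qed

lemma prob_allm: "cprob (L*K) (\<lambda>\<omega>. \<forall>j<K. \<not> allm L (blk L j \<omega>)) = (1 - 1/2^L)^K"
proof -
  have "real (card {\<sigma>\<in>cube L. \<not> allm L \<sigma>}) / 2^L = 1 - 1/2^L"
    unfolding card_allm by (simp add: of_nat_diff diff_divide_distrib)
  then show ?thesis using cprob_prod[of L K "\<lambda>j \<sigma>. \<not> allm L \<sigma>"] by simp
qed

lemma prob_oneB: "cprob (L*K) (\<lambda>\<omega>. \<forall>j<K. \<not> oneB L (blk L j \<omega>)) = (1 - L/2^L)^K"
proof -
  have "L \<le> 2^L" by (simp add: less_imp_le)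
  then have "real (card {\<sigma>\<in>cube L. \<not> oneB L \<sigma>}) / 2^L = 1 - L/2^L"
    unfolding card_oneB by (simp add: of_nat_diff diff_divide_distrib)
  then show ?thesis using cprob_prod[of L K "\<lambda>j \<sigma>. \<not> oneB L \<sigma>"] by simp
qed

lemma prob_oneA_set:
  assumes "S \<subseteq> {..<K}"
  shows "cprob (L*K) (\<lambda>\<omega>. \<forall>j<K. j \<in> S \<longrightarrow> \<not> oneA L (blk L j \<omega>)) = (1 - L/2^L)^card S"
proof -
  have "L \<le> 2^L" by (simp add: less_imp_le)
  then have c: "real (card {\<sigma>\<in>cube L. \<not> oneA L \<sigma>}) / 2^L = 1 - L/2^L"
    unfolding card_oneA by (simp add: of_nat_diff diff_divide_distrib)
  have "real (card {\<sigma>\<in>cube L. j \<in> S \<longrightarrow> \<not> oneA L \<sigma>}) / 2^L = (if j \<in> S then 1 - L/2^L else 1)" for j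
    using c by (cases "j \<in> S") (simp_all add: card_cube)
  then have "cprob (L*K) (\<lambda>\<omega>. \<forall>j<K. j \<in> S \<longrightarrow> \<not> oneA L (blk L j \<omega>)) = (\<Prod>j<K. if j \<in> S then 1 - L/2^L else 1)"
    using cprob_prod[of L K "\<lambda>j \<sigma>. j \<in> S \<longrightarrow> \<not> oneA L \<sigma>"] by simp
  also have "\<dots> = (\<Prod>j\<in>{..<K} \<inter> S. 1 - L/2^L)"
    by (simp add: prod.If_cases)
  also have "{..<K} \<inter> S = S" using assms by auto
  finally show ?thesis by simp
qed

lemma prob_oneA: "cprob (L*K) (\<lambda>\<omega>. \<forall>j<K. \<not> oneA L (blk L j \<omega>)) = (1 - L/2^L)^K"
  using prob_oneA_set[of "{..<K}" K L] by simp

lemma cprob_pos: "cprob m P = 1 - cprob m (\<lambda>\<omega>. \<not> P \<omega>)"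
  using cprob_compl[of m "\<lambda>\<omega>. \<not> P \<omega>"] by simp

lemma bound_zero:
  "cprob (L*K) (\<lambda>\<omega>. tribes L K \<omega> - tribes L K (neg (L*K) \<omega>) = 0) \<ge> 2 * (1 - 1/2^L)^K - 1"
proof -
  let ?P = "\<lambda>\<omega>. (\<forall>j<K. \<not> all1 L (blk L j \<omega>)) \<and> (\<forall>j<K. \<not> allm L (blk L j \<omega>))"
  have "cprob (L*K) (\<lambda>\<omega>. \<not> ?P \<omega>) \<le> cprob (L*K) (\<lambda>\<omega>. \<not> (\<forall>j<K. \<not> all1 L (blk L j \<omega>)) \<or> \<not> (\<forall>j<K. \<not> allm L (blk L j \<omega>)))"
    by (rule cprob_mono) auto
  also have "\<dots> \<le> cprob (L*K) (\<lambda>\<omega>. \<not> (\<forall>j<K. \<not> all1 L (blk L j \<omega>))) + cprob (L*K) (\<lambda>\<omega>. \<not> (\<forall>j<K. \<not> allm L (blk L j \<omega>)))"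
    by (rule cprob_disj)
  also have "\<dots> = 2 - 2 * (1 - 1/2^L)^K"
    unfolding cprob_compl prob_all1 prob_allm by simp
  finally have "cprob (L*K) ?P \<ge> 2 * (1 - 1/2^L)^K - 1" using cprob_pos[of "L*K" ?P] by linarith
  also have "cprob (L*K) ?P \<le> cprob (L*K) (\<lambda>\<omega>. tribes L K \<omega> - tribes L K (neg (L*K) \<omega>) = 0)"
  proof (rule cprob_mono)
    fix \<omega> assume "?P \<omega>"
    then have "tribes L K \<omega> = 0" "tribes L K (neg (L*K) \<omega>) = 0"
      unfolding tribes_neg by (auto simp: tribes_iff)
    then show "tribes L K \<omega> - tribes L K (neg (L*K) \<omega>) = 0" by simp
  qed
  finally show ?thesis .
qed

lemma bound_bribe:
  "cprob (L*K) (\<lambda>\<omega>. \<exists>i<L*K. \<exists>j<L*K. tribes L K (flip \<omega> i) - tribes L K (neg (L*K) (flip \<omega> i)) = 1 \<and>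
            tribes L K (flip \<omega> j) - tribes L K (neg (L*K) (flip \<omega> j)) = -1)
   \<ge> 1 - 2 * (1 - L/2^L)^K - 2 * (1 - (1 - 1/2^L)^K)"
proof -
  let ?A = "\<lambda>\<omega>. \<forall>j<K. \<not> oneA L (blk L j \<omega>)"
  let ?B = "\<lambda>\<omega>. \<forall>j<K. \<not> oneB L (blk L j \<omega>)"
  let ?C = "\<lambda>\<omega>. \<not> (\<forall>j<K. \<not> all1 L (blk L j \<omega>))"
  let ?D = "\<lambda>\<omega>. \<not> (\<forall>j<K. \<not> allm L (blk L j \<omega>))"
  let ?E = "\<lambda>\<omega>. \<exists>i<L*K. \<exists>j<L*K. tribes L K (flip \<omega> i) - tribes L K (neg (L*K) (flip \<omega> i)) = 1 \<and>
            tribes L K (flip \<omega> j) - tribes L K (neg (L*K) (flip \<omega> j)) = -1"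
  have "cprob (L*K) (\<lambda>\<omega>. \<not> ?E \<omega>) \<le> cprob (L*K) (\<lambda>\<omega>. (?A \<omega> \<or> ?B \<omega>) \<or> (?C \<omega> \<or> ?D \<omega>))"
    by (rule cprob_mono) (use bribe_event in blast)
  also have "\<dots> \<le> cprob (L*K) (\<lambda>\<omega>. ?A \<omega> \<or> ?B \<omega>) + cprob (L*K) (\<lambda>\<omega>. ?C \<omega> \<or> ?D \<omega>)"
    by (rule cprob_disj)
  also have "\<dots> \<le> (cprob (L*K) ?A + cprob (L*K) ?B) + (cprob (L*K) ?C + cprob (L*K) ?D)"
    by (intro add_mono cprob_disj)
  also have "\<dots> = 2 * (1 - L/2^L)^K + 2 * (1 - (1 - 1/2^L)^K)"
    unfolding cprob_compl prob_all1 prob_allm prob_oneA prob_oneB by simp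
  finally show ?thesis using cprob_pos[of "L*K" ?E] by linarith
qed

lemma bound_pivot:
  assumes "0 < L"
  shows "cprob (L*K) (\<lambda>\<omega>. G \<le> card (pivotal (L*K) (tribes L K) \<omega>))
     \<ge> 1 - G * (1 - L/2^L)^(K div G) - (1 - (1 - 1/2^L)^K)"
proof -
  define sz where "sz = K div G"
  let ?A = "\<lambda>g \<omega>. \<forall>j<K. j \<in> {g * sz..<g * sz+sz} \<longrightarrow> \<not> oneA L (blk L j \<omega>)"
  let ?C = "\<lambda>\<omega>. \<not> (\<forall>j<K. \<not> all1 L (blk L j \<omega>))"
  let ?E = "\<lambda>\<omega>. G \<le> card (pivotal (L*K) (tribes L K) \<omega>)"
  have "\<not> ?E \<omega> \<Longrightarrow> (\<exists>g<G. ?A g \<omega>) \<or> ?C \<omega>" for \<omega>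
    using pivot_count[OF assms, of G K sz \<omega>] by auto
  then have "cprob (L*K) (\<lambda>\<omega>. \<not> ?E \<omega>) \<le> cprob (L*K) (\<lambda>\<omega>. (\<exists>g<G. ?A g \<omega>) \<or> ?C \<omega>)"
    by (intro cprob_mono) auto
  also have "\<dots> \<le> cprob (L*K) (\<lambda>\<omega>. \<exists>g<G. ?A g \<omega>) + cprob (L*K) ?C"
    by (rule cprob_disj)
  also have "\<dots> \<le> (\<Sum>g<G. cprob (L*K) (?A g)) + cprob (L*K) ?C"
    by (intro add_mono cprob_Ex order_refl)
  also have "(\<Sum>g<G. cprob (L*K) (?A g)) = (\<Sum>g<G. (1 - L/2^L)^sz)"
  proof (rule sum.cong[OF refl])
    fix g assume "g \<in> {..<G}"
    then have "g * sz + sz \<le> K"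
    proof -
      have "g * sz + sz = Suc g * sz" by simp
      also have "\<dots> \<le> G * sz" using \<open>g \<in> {..<G}\<close> by (intro mult_le_mono1) simp
      also have "\<dots> \<le> K" unfolding sz_def by (metis div_mult_mod_eq le_add1 mult.commute)
      finally show ?thesis .
    qed
    then have "{g * sz..<g * sz+sz} \<subseteq> {..<K}" by auto
    then show "cprob (L*K) (?A g) = (1 - L/2^L)^sz" using prob_oneA_set[of "{g * sz..<g * sz+sz}" K L] by simp
  qed
  also have "cprob (L*K) ?C = 1 - (1 - 1/2^L)^K" unfolding cprob_compl prob_all1 ..
  finally have "cprob (L*K) (\<lambda>\<omega>. \<not> ?E \<omega>) \<le> G * (1 - L/2^L)^sz + (1 - (1 - 1/2^L)^K)" by simp
  then show ?thesis using cprob_pos[of "L*K" ?E] unfolding sz_def by linarith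
qed




lemma pow_exp_bound: "0 \<le> (p::real) \<Longrightarrow> p \<le> 1 \<Longrightarrow> (1 - p)^s \<le> exp (-(p * s))"
proof -
  assume p: "0 \<le> p" "p \<le> 1"
  have "(1 - p)^s \<le> exp (-p)^s" using p exp_ge_add_one_self[of "-p"] by (intro power_mono) auto
  also have "\<dots> = exp (-(p * s))" by (simp add: exp_of_nat_mult[symmetric] mult.commute)
  finally show ?thesis .
qed

lemma p_le1: "real L / 2^L \<le> 1"
proof -
  have "real L \<le> 2^L" using less_exp[of L] by (metis less_imp_le of_nat_le_iff of_nat_numeral of_nat_power)
  then show ?thesis by simp
qed

lemma group_bound:
  fixes L K :: nat
  defines "p \<equiv> real L / 2^L"
  defines "y \<equiv> sqrt (real K * p)"
  assumes G: "1 \<le> nat \<lfloor>y\<rfloor>"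
  shows "real (nat \<lfloor>y\<rfloor>) * (1 - p)^(K div nat \<lfloor>y\<rfloor>) \<le> exp 1 * (y * exp (-y))"
proof -
  define G where "G = nat \<lfloor>y\<rfloor>"
  define s where "s = K div G"
  have p0: "0 \<le> p" and p1: "p \<le> 1" unfolding p_def using p_le1[of L] by auto
  have y0: "0 \<le> y" unfolding y_def using p0 by simp
  have Gy: "real G \<le> y" unfolding G_def using y0 by linarith
  have G1: "1 \<le> G" using G unfolding G_def .
  then have Gpos: "0 < real G" by simp
  have ypos: "0 < y" using Gy G1 by linarith
  have yy: "y * y = real K * p" unfolding y_def using p0 by simp
  have "K = s * G + K mod G" unfolding s_def by simp
  moreover have "K mod G < G" using G1 by simp
  ultimately have "real K < (real s + 1) * real G"
    by (metis (no_types, opaque_lifting) add_less_cancel_left distrib_right mult_1 of_nat_add of_nat_less_iff of_nat_mult)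
  then have Ks: "real K / real G < real s + 1" using Gpos by (simp add: divide_less_eq)
  have "y = y * y / y" using ypos by simp
  also have "\<dots> = real K * p / y" using yy by simp
  also have "\<dots> \<le> real K * p / real G" using p0 Gpos Gy by (intro divide_left_mono) auto
  also have "\<dots> = p * (real K / real G)" by simp
  also have "\<dots> \<le> p * (real s + 1)" using Ks p0 by (intro mult_left_mono) auto
  finally have "y - 1 \<le> p * s" using p1 by (simp add: algebra_simps)
  then have "(1 - p)^s \<le> exp (1 - y)" using pow_exp_bound[OF p0 p1, of s] by (smt (verit) exp_le_cancel_iff)
  also have "\<dots> = exp 1 * exp (-y)" by (simp add: exp_diff exp_minus field_simps)
  finally have "real G * (1 - p)^s \<le> y * (exp 1 * exp (-y))"
    using Gy p1 by (intro mult_mono) auto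
  then show ?thesis unfolding G_def s_def by (simp add: algebra_simps)
qed

lemma yexp: "((\<lambda>t::real. t * exp (-t)) \<longlongrightarrow> 0) at_top"
  by real_asymp




theorem proposition1:
  fixes l k :: "nat \<Rightarrow> nat"
  assumes "\<And>n. l n > 0" and "\<And>n. k n > 0"
    and "(\<lambda>n. (1 - 1 / 2 ^ l n :: real) ^ k n) \<longlonglongrightarrow> 1"
    and "filterlim (\<lambda>n. real (k n * l n) / 2 ^ l n) at_top sequentially"
  shows "bribable (\<lambda>n. l n * k n)
           (\<lambda>n \<omega>. tribes (l n) (k n) \<omega> - tribes (l n) (k n) (neg (l n * k n) \<omega>))
       \<and> (\<exists>a :: nat \<Rightarrow> nat. (\<forall>n. a n > 0) \<and> filterlim a at_top sequentially \<and>
            (\<lambda>n. cprob (l n * k n)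
                   (\<lambda>\<omega>. card (pivotal (l n * k n) (tribes (l n) (k n)) \<omega>) > a n)) \<longlonglongrightarrow> 1)"
proof -
  note l0 = assms(1) and k0 = assms(2)
  define q where "q n = (1 - 1 / 2 ^ l n :: real) ^ k n" for n
  have hq: "q \<longlonglongrightarrow> 1" unfolding q_def using assms(3) .
  define p where "p n = real (l n) / 2 ^ l n" for n
  define x where "x n = real (k n) * p n" for n
  have hx: "filterlim x at_top sequentially"
  proof -
    have "(\<lambda>n. real (k n * l n) / 2 ^ l n) = x" unfolding x_def p_def by (simp add: fun_eq_iff)
    then show ?thesis using assms(4) by simp
  qed
  have p01: "0 \<le> p n" "p n \<le> 1" for n unfolding p_def using p_le1[of "l n"] by auto
  have ha: "(\<lambda>n. (1 - p n) ^ k n) \<longlonglongrightarrow> 0"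
  proof (rule tendsto_sandwich[of "\<lambda>_. 0" _ _ "\<lambda>n. exp (- x n)"])
    show "\<forall>\<^sub>F n in sequentially. 0 \<le> (1 - p n) ^ k n" using p01 by auto
    show "\<forall>\<^sub>F n in sequentially. (1 - p n) ^ k n \<le> exp (- x n)"
    proof (intro always_eventually allI)
      fix n
      show "(1 - p n) ^ k n \<le> exp (- x n)"
        using pow_exp_bound[OF p01(1)[of n] p01(2)[of n], of "k n"] unfolding x_def by (simp add: mult.commute)
    qed
    show "(\<lambda>_. 0::real) \<longlonglongrightarrow> 0" by simp
    have "filterlim (\<lambda>n. - x n) at_bot sequentially" using hx by (simp add: filterlim_uminus_at_top)
    then show "(\<lambda>n. exp (- x n)) \<longlonglongrightarrow> 0" by (rule filterlim_compose[OF exp_at_bot])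
  qed
  have part1: "bribable (\<lambda>n. l n * k n)
           (\<lambda>n \<omega>. tribes (l n) (k n) \<omega> - tribes (l n) (k n) (neg (l n * k n) \<omega>))"
    unfolding bribable_def
  proof (intro conjI)
    show "\<forall>n. \<forall>\<omega>\<in>cube (l n * k n). tribes (l n) (k n) \<omega> - tribes (l n) (k n) (neg (l n * k n) \<omega>) \<in> {- 1, 0, 1}"
      by (simp add: tribes_def)
    show "\<forall>n. transitive_fun (l n * k n) (\<lambda>\<omega>. tribes (l n) (k n) \<omega> - tribes (l n) (k n) (neg (l n * k n) \<omega>))"
      using trans_f[OF l0 k0] by blast
    show "(\<lambda>n. cprob (l n * k n) (\<lambda>\<omega>. tribes (l n) (k n) \<omega> - tribes (l n) (k n) (neg (l n * k n) \<omega>) = 0)) \<longlonglongrightarrow> 1"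
    proof (rule tendsto_sandwich[of "\<lambda>n. 2 * q n - 1" _ _ "\<lambda>_. 1"])
      show "\<forall>\<^sub>F n in sequentially. 2 * q n - 1 \<le> cprob (l n * k n) (\<lambda>\<omega>. tribes (l n) (k n) \<omega> - tribes (l n) (k n) (neg (l n * k n) \<omega>) = 0)"
        unfolding q_def using bound_zero by auto
      show "\<forall>\<^sub>F n in sequentially. cprob (l n * k n) (\<lambda>\<omega>. tribes (l n) (k n) \<omega> - tribes (l n) (k n) (neg (l n * k n) \<omega>) = 0) \<le> 1"
        using cprob_le1 by auto
      show "(\<lambda>n. 2 * q n - 1) \<longlonglongrightarrow> 1" using tendsto_diff[OF tendsto_mult[OF tendsto_const hq] tendsto_const, of 2 1] by simp
    qed simp
    show "(\<lambda>n. cprob (l n * k n) (\<lambda>\<omega>. \<exists>i<l n * k n. \<exists>j<l n * k n.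
        tribes (l n) (k n) (flip \<omega> i) - tribes (l n) (k n) (neg (l n * k n) (flip \<omega> i)) = 1 \<and>
        tribes (l n) (k n) (flip \<omega> j) - tribes (l n) (k n) (neg (l n * k n) (flip \<omega> j)) = - 1)) \<longlonglongrightarrow> 1"
    proof (rule tendsto_sandwich[of "\<lambda>n. 1 - 2 * (1 - p n) ^ k n - 2 * (1 - q n)" _ _ "\<lambda>_. 1"])
      show "\<forall>\<^sub>F n in sequentially. 1 - 2 * (1 - p n) ^ k n - 2 * (1 - q n) \<le> cprob (l n * k n) (\<lambda>\<omega>. \<exists>i<l n * k n. \<exists>j<l n * k n.
        tribes (l n) (k n) (flip \<omega> i) - tribes (l n) (k n) (neg (l n * k n) (flip \<omega> i)) = 1 \<and>
        tribes (l n) (k n) (flip \<omega> j) - tribes (l n) (k n) (neg (l n * k n) (flip \<omega> j)) = - 1)"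
        unfolding q_def p_def using bound_bribe by auto
      show "\<forall>\<^sub>F n in sequentially. cprob (l n * k n) (\<lambda>\<omega>. \<exists>i<l n * k n. \<exists>j<l n * k n.
        tribes (l n) (k n) (flip \<omega> i) - tribes (l n) (k n) (neg (l n * k n) (flip \<omega> i)) = 1 \<and>
        tribes (l n) (k n) (flip \<omega> j) - tribes (l n) (k n) (neg (l n * k n) (flip \<omega> j)) = - 1) \<le> 1"
        using cprob_le1 by auto
      have "(\<lambda>n. 1 - 2 * (1 - p n) ^ k n - 2 * (1 - q n)) \<longlonglongrightarrow> 1 - 2 * 0 - 2 * (1 - 1)"
        by (intro tendsto_intros ha hq)
      then show "(\<lambda>n. 1 - 2 * (1 - p n) ^ k n - 2 * (1 - q n)) \<longlonglongrightarrow> 1" by simp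
    qed simp
  qed
  define y where "y n = sqrt (x n)" for n
  define G where "G n = nat \<lfloor>y n\<rfloor>" for n
  define a where "a n = max 1 (G n - 1)" for n
  have hy: "filterlim y at_top sequentially" unfolding y_def by (rule filterlim_compose[OF sqrt_at_top hx])
  have yZ: "\<forall>\<^sub>F n in sequentially. real Z + 2 \<le> y n" for Z using hy by (simp add: filterlim_at_top)
  have GZ: "\<forall>\<^sub>F n in sequentially. Z + 2 \<le> G n" for Z
    using yZ[of Z]
  proof (rule eventually_mono)
    fix n assume "real Z + 2 \<le> y n"
    then have "int Z + 2 \<le> \<lfloor>y n\<rfloor>" by linarith
    then show "Z + 2 \<le> G n" unfolding G_def by linarith
  qed
  have apos: "\<forall>n. a n > 0" unfolding a_def by (simp add: less_max_iff_disj)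
  have alim: "filterlim a at_top sequentially"
    unfolding filterlim_at_top
  proof
    fix Z show "\<forall>\<^sub>F n in sequentially. Z \<le> a n"
      using GZ[of Z] by (rule eventually_mono) (simp add: a_def)
  qed
  define B where "B n = real (G n) * (1 - p n) ^ (k n div G n)" for n
  have hB: "B \<longlonglongrightarrow> 0"
  proof (rule tendsto_sandwich[of "\<lambda>_. 0" _ _ "\<lambda>n. exp 1 * (y n * exp (- y n))"])
    show "\<forall>\<^sub>F n in sequentially. 0 \<le> B n" unfolding B_def using p01 by auto
    show "\<forall>\<^sub>F n in sequentially. B n \<le> exp 1 * (y n * exp (- y n))"
      using GZ[of 0]
    proof (rule eventually_mono)
      fix n assume "0 + 2 \<le> G n"
      then show "B n \<le> exp 1 * (y n * exp (- y n))"
        using group_bound[of "k n" "l n"] unfolding B_def G_def y_def x_def p_def by simp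
    qed
    show "(\<lambda>_. 0::real) \<longlonglongrightarrow> 0" by simp
    have "(\<lambda>n. y n * exp (- y n)) \<longlonglongrightarrow> 0" using filterlim_compose[OF yexp hy] by simp
    then show "(\<lambda>n. exp 1 * (y n * exp (- y n))) \<longlonglongrightarrow> 0" using tendsto_mult_right_zero by blast
  qed
  have part2: "(\<lambda>n. cprob (l n * k n) (\<lambda>\<omega>. card (pivotal (l n * k n) (tribes (l n) (k n)) \<omega>) > a n)) \<longlonglongrightarrow> 1"
  proof (rule tendsto_sandwich[of "\<lambda>n. 1 - B n - (1 - q n)" _ _ "\<lambda>_. 1"])
    show "\<forall>\<^sub>F n in sequentially. 1 - B n - (1 - q n) \<le> cprob (l n * k n) (\<lambda>\<omega>. card (pivotal (l n * k n) (tribes (l n) (k n)) \<omega>) > a n)"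
      using GZ[of 0]
    proof (rule eventually_mono)
      fix n assume G2: "0 + 2 \<le> G n"
      have "1 - B n - (1 - q n) \<le> cprob (l n * k n) (\<lambda>\<omega>. G n \<le> card (pivotal (l n * k n) (tribes (l n) (k n)) \<omega>))"
        using bound_pivot[where L="l n" and G="G n" and K="k n", OF l0[of n]] unfolding B_def q_def p_def by simp
      also have "\<dots> \<le> cprob (l n * k n) (\<lambda>\<omega>. card (pivotal (l n * k n) (tribes (l n) (k n)) \<omega>) > a n)"
        using G2 by (intro cprob_mono) (auto simp: a_def)
      finally show "1 - B n - (1 - q n) \<le> cprob (l n * k n) (\<lambda>\<omega>. card (pivotal (l n * k n) (tribes (l n) (k n)) \<omega>) > a n)" .
    qed
    show "\<forall>\<^sub>F n in sequentially. cprob (l n * k n) (\<lambda>\<omega>. card (pivotal (l n * k n) (tribes (l n) (k n)) \<omega>) > a n) \<le> 1"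
      using cprob_le1 by auto
    have "(\<lambda>n. 1 - B n - (1 - q n)) \<longlonglongrightarrow> 1 - 0 - (1 - 1)" by (intro tendsto_intros hB hq)
    then show "(\<lambda>n. 1 - B n - (1 - q n)) \<longlonglongrightarrow> 1" by simp
  qed simp
  show ?thesis using part1 apos alim part2 by blast
qed


end
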